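(* Let $\mathbb{F}$ be a field with $\mathrm{char}(\mathbb{F})\neq 2$, let $n\geq 2$ be an integer, and let $L$ be an $n$-dimensional nonnilpotent solvable Lie algebra over $\mathbb{F}$ of breadth $1$. Then $L$ has a basis $\{x,y,z_1,z_2,\ldots,z_{n-2}\}$ such that $[x,y]=x$ and $z_1,z_2,\ldots,z_{n-2}\in Z(L)$.
   Context: For $x\in L$, the breadth of $x$ is $b(x)=\mathrm{rank}(\mathrm{ad}_x)$, and the breadth of $L$ is $b(L)=\max\{b(x)\mid x\in L\}$. $Z(L)$ denotes the center of $L$. *)

theory Defs
  imports Complex_Main
begin

definition lie_algebra :: "('a::field \<Rightarrow> 'b::ab_group_add \<Rightarrow> 'b) \<Rightarrow> ('b \<Rightarrow> 'b \<Rightarrow> 'b) \<Rightarrow> bool" where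
  "lie_algebra scl br \<longleftrightarrow>
     vector_space scl \<and>
     (\<forall>x y z. br (x + y) z = br x z + br y z) \<and>
     (\<forall>x y z. br x (y + z) = br x y + br x z) \<and>
     (\<forall>c x y. br (scl c x) y = scl c (br x y)) \<and>
     (\<forall>c x y. br x (scl c y) = scl c (br x y)) \<and>
     (\<forall>x. br x x = 0) \<and>
     (\<forall>x y z. br x (br y z) + br y (br z x) + br z (br x y) = 0)"

definition lie_bracket_set :: "('a::field \<Rightarrow> 'b::ab_group_add \<Rightarrow> 'b) \<Rightarrow> ('b \<Rightarrow> 'b \<Rightarrow> 'b) \<Rightarrow> 'b set \<Rightarrow> 'b set \<Rightarrow> 'b set" where
  "lie_bracket_set scl br A B = module.span scl {br a b | a b. a \<in> A \<and> b \<in> B}"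

fun derived_series :: "('a::field \<Rightarrow> 'b::ab_group_add \<Rightarrow> 'b) \<Rightarrow> ('b \<Rightarrow> 'b \<Rightarrow> 'b) \<Rightarrow> nat \<Rightarrow> 'b set" where
  "derived_series scl br 0 = UNIV"
| "derived_series scl br (Suc k) = lie_bracket_set scl br (derived_series scl br k) (derived_series scl br k)"

fun lower_central_series :: "('a::field \<Rightarrow> 'b::ab_group_add \<Rightarrow> 'b) \<Rightarrow> ('b \<Rightarrow> 'b \<Rightarrow> 'b) \<Rightarrow> nat \<Rightarrow> 'b set" where
  "lower_central_series scl br 0 = UNIV"
| "lower_central_series scl br (Suc k) = lie_bracket_set scl br UNIV (lower_central_series scl br k)"

definition lie_solvable :: "('a::field \<Rightarrow> 'b::ab_group_add \<Rightarrow> 'b) \<Rightarrow> ('b \<Rightarrow> 'b \<Rightarrow> 'b) \<Rightarrow> bool" where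
  "lie_solvable scl br \<longleftrightarrow> (\<exists>k. derived_series scl br k = {0})"

definition lie_nilpotent :: "('a::field \<Rightarrow> 'b::ab_group_add \<Rightarrow> 'b) \<Rightarrow> ('b \<Rightarrow> 'b \<Rightarrow> 'b) \<Rightarrow> bool" where
  "lie_nilpotent scl br \<longleftrightarrow> (\<exists>k. lower_central_series scl br k = {0})"

definition lie_center :: "('b::ab_group_add \<Rightarrow> 'b \<Rightarrow> 'b) \<Rightarrow> 'b set" where
  "lie_center br = {c. \<forall>v. br c v = 0}"

definition elem_breadth :: "('a::field \<Rightarrow> 'b::ab_group_add \<Rightarrow> 'b) \<Rightarrow> ('b \<Rightarrow> 'b \<Rightarrow> 'b) \<Rightarrow> 'b \<Rightarrow> nat" where
  "elem_breadth scl br x = vector_space.dim scl (range (br x))"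

text \<open>b(L) = max of b(x) over x in L (finite-dimensional case: a maximum of a bounded set).\<close>
definition lie_breadth :: "('a::field \<Rightarrow> 'b::ab_group_add \<Rightarrow> 'b) \<Rightarrow> ('b \<Rightarrow> 'b \<Rightarrow> 'b) \<Rightarrow> nat" where
  "lie_breadth scl br = Max (range (elem_breadth scl br))"

definition has_dim :: "('a::field \<Rightarrow> 'b::ab_group_add \<Rightarrow> 'b) \<Rightarrow> nat \<Rightarrow> bool" where
  "has_dim scl n \<longleftrightarrow> (\<exists>B. finite B \<and> card B = n \<and> \<not> module.dependent scl B \<and> module.span scl B = UNIV)"

end

theory Submission
  imports Defs
begin

locale lie_alg = vector_space scale for scale :: "'a::field \<Rightarrow> 'b::ab_group_add \<Rightarrow> 'b" +
  fixes br :: "'b \<Rightarrow> 'b \<Rightarrow> 'b"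
  assumes addL: "br (x + y) z = br x z + br y z"
    and addR: "br x (y + z) = br x y + br x z"
    and sclL: "br (scale c x) y = scale c (br x y)"
    and sclR: "br x (scale c y) = scale c (br x y)"
    and alt: "br x x = 0"
    and jac: "br x (br y z) + br y (br z x) + br z (br x y) = 0"
begin

lemma zeroL[simp]: "br 0 y = 0"
  using addL[of 0 0 y] by simp
lemma zeroR[simp]: "br y 0 = 0"
  using addR[of y 0 0] by simp
lemma anti: "br x y = - br y x"
proof -
  have "0 = br (x + y) (x + y)" by (rule alt[symmetric])
  also have "\<dots> = br x x + br x y + (br y x + br y y)" by (simp only: addL addR add_ac)
  finally have "br x y + br y x = 0" by (simp add: alt)
  then show ?thesis by (simp add: eq_neg_iff_add_eq_0)
qed
lemma negL[simp]: "br (- x) y = - br x y"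
  using addL[of "- x" x y] by (simp add: eq_neg_iff_add_eq_0)
lemma negR[simp]: "br y (- x) = - br y x"
  using addR[of y "- x" x] by (simp add: eq_neg_iff_add_eq_0)
lemma diffL: "br (x - z) y = br x y - br z y"
  using addL[of x "- z" y] by simp
lemma diffR: "br y (x - z) = br y x - br y z"
  using addR[of y x "- z"] by simp

definition S :: "'b \<Rightarrow> 'b \<Rightarrow> bool" where
  "S x v \<longleftrightarrow> (\<forall>w. \<exists>c. br x w = scale c v)"

lemma rescale:
  assumes "S x u" "br x w0 = scale k v" "scale k v \<noteq> 0"
  shows "S x v"
proof -
  obtain c0 where c0: "br x w0 = scale c0 u" using assms(1) unfolding S_def by blast
  have k: "k \<noteq> 0" using assms(3) by auto
  have "c0 \<noteq> 0" using assms(2,3) c0 by auto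
  then have "u = scale (inverse c0) (scale c0 u)" by simp
  also have "\<dots> = scale (inverse c0) (scale k v)" using assms(2) c0 by simp
  also have "\<dots> = scale (k / c0) v" by (simp add: divide_inverse mult.commute)
  finally have u: "u = scale (k / c0) v" .
  show ?thesis unfolding S_def
  proof
    fix w
    obtain c where "br x w = scale c u" using assms(1) unfolding S_def by blast
    then show "\<exists>c. br x w = scale c v" using u by auto
  qed
qed

lemma no_eig:
  assumes noeig: "\<not>(\<exists>y v. v \<noteq> 0 \<and> br v y = v)"
    and "br x p = scale c p" "p \<noteq> 0"
  shows "c = 0"
proof (rule ccontr)
  assume c: "c \<noteq> 0"
  have "br p (scale (- 1 / c) x) = p"
    using assms(2) c by (subst anti) (simp add: sclL)
  then show False using noeig assms(3) by blast
qed

lemma caseB: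
  assumes rank1: "\<And>x. \<exists>u. S x u"
    and noeig: "\<not>(\<exists>y v. v \<noteq> 0 \<and> br v y = v)"
  shows "lower_central_series scale br 2 = {0}"
proof -
  have sq: "br x (br x w) = 0" for x w
  proof (cases "br x w = 0")
    case False
    obtain u where u: "S x u" using rank1 by blast
    obtain a where a: "br x w = scale a u" using u unfolding S_def by blast
    obtain b where b: "br x (br x w) = scale b u" using u unfolding S_def by blast
    have "a \<noteq> 0" using a False by auto
    then have "br x (br x w) = scale (b / a) (br x w)" using a b by simp
    then have "b / a = 0" using no_eig[OF noeig _ False] by blast
    then show ?thesis using b \<open>a \<noteq> 0\<close> by simp
  qed simp
  have ac: "br a (br b w) = - br b (br a w)" for a b w
  proof -
    have "0 = br (a + b) (br (a + b) w)" using sq by simp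
    also have "\<dots> = br a (br a w) + br a (br b w) + (br b (br a w) + br b (br b w))"
      by (simp only: addL addR add_ac)
    finally have "br a (br b w) + br b (br a w) = 0" by (simp add: sq)
    then show ?thesis by (simp add: eq_neg_iff_add_eq_0)
  qed
  have tri: "br a (br b w) = 0" for a b w
  proof (cases "br b w = 0")
    case False
    obtain u where u: "S b u" using rank1 by blast
    obtain s where s: "br b w = scale s u" using u unfolding S_def by blast
    obtain t where t: "br b (br a w) = scale t u" using u unfolding S_def by blast
    have "s \<noteq> 0" using s False by auto
    then have "br a (br b w) = scale (- t / s) (br b w)" using s t ac[of a b w]
      by (simp add: scale_minus_left)
    then have "- t / s = 0" using no_eig[OF noeig _ False] by blast
    then show ?thesis using ac[of a b w] t \<open>s \<noteq> 0\<close> by simp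
  qed simp
  have "c \<in> lower_central_series scale br 1 \<Longrightarrow> br a c = 0" for a c
  proof -
    assume "c \<in> lower_central_series scale br 1"
    then have "c \<in> span {br a b |a b. a \<in> UNIV \<and> b \<in> UNIV}"
      by (simp add: lie_bracket_set_def)
    then show "br a c = 0"
    proof (induction rule: span_induct)
      case base
      show ?case by (rule subspaceI) (auto simp: addR sclR)
    next
      case (step x)
      then show ?case using tri by auto
    qed
  qed
  then have sub: "{br a c |a c. a \<in> UNIV \<and> c \<in> lower_central_series scale br 1} \<subseteq> {0}"
    by auto
  have eq: "lower_central_series scale br 2 =
      span {br a c |a c. a \<in> UNIV \<and> c \<in> lower_central_series scale br 1}"
    by (simp only: numeral_2_eq_2 One_nat_def lower_central_series.simps(2) lie_bracket_set_def)
  have "span {br a c |a c. a \<in> UNIV \<and> c \<in> lower_central_series scale br 1} \<subseteq> span {0}"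
    by (rule span_mono[OF sub])
  then have "lower_central_series scale br 2 \<subseteq> {0}" using eq by simp
  then show ?thesis using eq span_zero by auto
qed

lemma caseA:
  assumes rank1: "\<And>x. \<exists>u. S x u"
    and v0: "v \<noteq> 0" and vy: "br v y = v"
    and fin: "finite B0" "span B0 = UNIV" "independent B0" "card B0 = n"
  shows "\<exists>x y (z::nat \<Rightarrow> 'b). (let B = insert x (insert y (z ` {1..n-2})) in
           card B = n \<and> \<not> dependent B \<and> span B = UNIV) \<and>
           br x y = x \<and> (\<forall>i\<in>{1..n-2}. z i \<in> lie_center br)"
proof -
  have yv: "br y v = - v" using vy anti[of y v] by simp
  have mv: "scale (- 1) v \<noteq> 0" using v0 by simp
  have Sy: "S y v"
  proof -
    obtain u where "S y u" using rank1 by blast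
    then show ?thesis using rescale[of y u v "- 1" v] yv mv by simp
  qed
  have Sa: "S a v" for a
  proof (cases "br a y = 0")
    case False
    obtain c where c: "br y a = scale c v" using Sy unfolding S_def by blast
    have ay: "br a y = scale (- c) v" using anti[of a y] c by (simp add: scale_minus_left)
    obtain u where "S a u" using rank1 by blast
    then show ?thesis using rescale[of a u y "- c" v] ay False by simp
  next
    case True
    have ya: "br y a = 0" using anti[of y a] True by simp
    obtain c where c: "br y (br a v) = scale c v" using Sy unfolding S_def by blast
    have "br y (br a v) + br a (br v y) + br v (br y a) = 0" by (rule jac)
    then have av: "br a v = scale (- c) v" using vy ya c
      by (simp add: scale_minus_left eq_neg_iff_add_eq_0 add.commute)
    define b where "b = a + scale (1 - c) y"
    have e: "scale c v + scale (1 - c) v = v" using scale_left_distrib[of c "1 - c" v] by simp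
    have "br b v = - (scale c v + scale (1 - c) v)"
      by (simp add: b_def addL sclL av yv scale_minus_left)
    also have "\<dots> = scale (- 1) v" using e by simp
    finally have bv: "br b v = scale (- 1) v" .
    obtain u where "S b u" using rank1 by blast
    then have Sb: "S b v" using rescale[of b u v "- 1" v] bv mv by simp
    show ?thesis unfolding S_def
    proof
      fix w
      obtain c1 where c1: "br b w = scale c1 v" using Sb unfolding S_def by blast
      obtain c2 where c2: "br y w = scale c2 v" using Sy unfolding S_def by blast
      have "br a w = br b w - scale (1 - c) (br y w)"
        by (simp add: b_def addL sclL)
      also have "\<dots> = scale (c1 - (1 - c) * c2) v"
        by (simp add: c1 c2 scale_left_diff_distrib)
      finally show "\<exists>c. br a w = scale c v" by blast
    qed
  qed
  define C where "C = {a. br a v = 0 \<and> br a y = 0}"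
  have subC: "subspace C" unfolding C_def by (rule subspaceI) (auto simp: addL sclL)
  have decomp: "\<exists>c k l. c \<in> C \<and> w = c + scale k v + scale l y" for w
  proof -
    obtain l where l: "br w v = scale l v" using Sa[of w] unfolding S_def by blast
    obtain k where k: "br w y = scale k v" using Sa[of w] unfolding S_def by blast
    define c where "c = w - scale k v + scale l y"
    have "br c v = 0" by (simp add: c_def diffL addL sclL alt l yv)
    moreover have "br c y = 0" by (simp add: c_def diffL addL sclL alt k vy)
    ultimately have "c \<in> C" unfolding C_def by simp
    moreover have "w = c + scale k v + scale (- l) y"
      by (simp add: c_def scale_minus_left)
    ultimately show ?thesis by blast
  qed
  have Ccent: "a \<in> lie_center br" if aC: "a \<in> C" for a
  proof -
    have CC: "br a c = 0" if cC: "c \<in> C" for c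
    proof -
      obtain m where m: "br a c = scale m v" using Sa unfolding S_def by blast
      have "br y (br a c) + br a (br c y) + br c (br y a) = 0" by (rule jac)
      moreover have "br c y = 0" using cC unfolding C_def by simp
      moreover have "br y a = 0" using aC anti[of y a] unfolding C_def by simp
      ultimately have "br y (br a c) = 0" by simp
      then have "scale m v = 0" using m by (simp add: sclR yv)
      then show ?thesis using m by simp
    qed
    show ?thesis unfolding lie_center_def
    proof (rule CollectI, rule allI)
      fix w
      obtain c k l where "c \<in> C" "w = c + scale k v + scale l y" using decomp by blast
      then show "br a w = 0" using CC aC by (simp add: addR sclR C_def)
    qed
  qed
  obtain BC where BC: "BC \<subseteq> C" "independent BC" "C \<subseteq> span BC" "card BC = dim C"
    using basis_exists by blast
  have spBC: "span BC \<subseteq> C" using span_minimal[OF BC(1) subC] .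
  have ynot: "y \<notin> span BC"
  proof
    assume "y \<in> span BC"
    then have "br y v = 0" using spBC unfolding C_def by auto
    then show False using yv v0 by simp
  qed
  have vnot: "v \<notin> span (insert y BC)"
  proof
    assume "v \<in> span (insert y BC)"
    then obtain k where "v - scale k y \<in> span BC" using span_breakdown_eq by blast
    then have "br (v - scale k y) y = 0" using spBC unfolding C_def by auto
    then show False using vy v0 by (simp add: diffL sclL alt)
  qed
  define B where "B = insert v (insert y BC)"
  have indB: "independent B" unfolding B_def
    using independent_insertI[OF vnot independent_insertI[OF ynot BC(2)]] .
  have spB: "span B = UNIV"
  proof -
    have "w \<in> span B" for w
    proof -
      obtain c k l where ckl: "c \<in> C" "w = c + scale k v + scale l y" using decomp by blast
      have "c \<in> span B" using ckl(1) BC(3) span_mono[of BC B] unfolding B_def by auto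
      moreover have "v \<in> span B" "y \<in> span B" unfolding B_def by (auto intro: span_base)
      ultimately show ?thesis using ckl(2) by (simp add: span_add span_scale)
    qed
    then show ?thesis by auto
  qed
  have finB: "finite B" using independent_span_bound[OF fin(1) indB] fin(2) by auto
  have d1: "dim (UNIV::'b set) = n" using dim_unique[of B0 UNIV n] fin by auto
  have d2: "dim (UNIV::'b set) = card B" using basis_card_eq_dim[of B UNIV] indB spB by auto
  have cardB: "card B = n" using d1 d2 by simp
  have finBC: "finite BC" using finB unfolding B_def by auto
  have yBC: "y \<notin> BC" using ynot span_base by blast
  have vyBC: "v \<notin> insert y BC" using vnot span_base by blast
  have "card B = Suc (Suc (card BC))" using finBC yBC vyBC unfolding B_def by simp
  then have cBC: "card BC = n - 2" using cardB by simp
  obtain h where h: "bij_betw h {1..card BC} BC" using ex_bij_betw_nat_finite_1[OF finBC] by blast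
  have himg: "h ` {1..n-2} = BC" using h cBC by (simp add: bij_betw_def)
  have hc: "\<forall>i\<in>{1..n-2}. h i \<in> lie_center br" using himg BC(1) Ccent by blast
  have main: "(let B' = insert v (insert y (h ` {1..n-2})) in
           card B' = n \<and> \<not> dependent B' \<and> span B' = UNIV)"
    using himg cardB indB spB unfolding B_def Let_def by simp
  have "(let B' = insert v (insert y (h ` {1..n-2})) in
           card B' = n \<and> \<not> dependent B' \<and> span B' = UNIV) \<and>
           br v y = v \<and> (\<forall>i\<in>{1..n-2}. h i \<in> lie_center br)"
    using main vy hc by (intro conjI)
  then have "\<exists>z::nat \<Rightarrow> 'b. (let B' = insert v (insert y (z ` {1..n-2})) in
           card B' = n \<and> \<not> dependent B' \<and> span B' = UNIV) \<and>
           br v y = v \<and> (\<forall>i\<in>{1..n-2}. z i \<in> lie_center br)"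
    by (rule exI[where x=h])
  then have "\<exists>y' (z::nat \<Rightarrow> 'b). (let B' = insert v (insert y' (z ` {1..n-2})) in
           card B' = n \<and> \<not> dependent B' \<and> span B' = UNIV) \<and>
           br v y' = v \<and> (\<forall>i\<in>{1..n-2}. z i \<in> lie_center br)"
    by (rule exI[where x=y])
  then show ?thesis by (rule exI[where x=v])
qed

end

theorem theorem2p6:
  fixes scl :: "'a::field \<Rightarrow> 'b::ab_group_add \<Rightarrow> 'b"
    and br :: "'b \<Rightarrow> 'b \<Rightarrow> 'b"
    and n :: nat
  assumes "(2::'a) \<noteq> 0"
    and "n \<ge> 2"
    and "lie_algebra scl br"
    and "has_dim scl n"
    and "lie_solvable scl br"
    and "\<not> lie_nilpotent scl br"
    and "lie_breadth scl br = 1"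
  shows "\<exists>x y (z::nat \<Rightarrow> 'b).
           (let B = insert x (insert y (z ` {1..n-2})) in
              card B = n \<and> \<not> module.dependent scl B \<and> module.span scl B = UNIV) \<and>
           br x y = x \<and> (\<forall>i\<in>{1..n-2}. z i \<in> lie_center br)"
proof -
  have A0: "vector_space scl \<and>
     (\<forall>x y z. br (x + y) z = br x z + br y z) \<and>
     (\<forall>x y z. br x (y + z) = br x y + br x z) \<and>
     (\<forall>c x y. br (scl c x) y = scl c (br x y)) \<and>
     (\<forall>c x y. br x (scl c y) = scl c (br x y)) \<and>
     (\<forall>x. br x x = 0) \<and>
     (\<forall>x y z. br x (br y z) + br y (br z x) + br z (br x y) = 0)"
    using assms(3) unfolding lie_algebra_def .
  then have A5: "\<forall>c x y. br x (scl c y) = scl c (br x y)" by (elim conjE)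
  then have A5': "\<forall>x c y. br x (scl c y) = scl c (br x y)" by blast
  have "lie_alg scl br"
    unfolding lie_alg_def lie_alg_axioms_def
    by (insert A0 A5', elim conjE, intro conjI; assumption)
  then interpret L: lie_alg scl br .
  obtain B0 where B0: "finite B0" "card B0 = n" "L.independent B0" "L.span B0 = UNIV"
    using assms(4) unfolding has_dim_def by blast
  have dimle: "elem_breadth scl br x \<le> n" for x
  proof -
    have "range (br x) \<subseteq> L.span B0" using B0(4) by simp
    then have "L.dim (range (br x)) \<le> card B0" using L.dim_le_card B0(1) by blast
    then show ?thesis using B0(2) unfolding elem_breadth_def by simp
  qed
  have "range (elem_breadth scl br) \<subseteq> {0..n}" using dimle by auto
  then have fr: "finite (range (elem_breadth scl br))" using finite_subset by blast
  have le1: "L.dim (range (br x)) \<le> 1" for x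
  proof -
    have "elem_breadth scl br x \<le> Max (range (elem_breadth scl br))"
      by (rule Max_ge[OF fr]) simp
    then show ?thesis using assms(7) unfolding lie_breadth_def elem_breadth_def by simp
  qed
  have rank1: "\<exists>u. L.S x u" for x
  proof -
    obtain BB where BB: "BB \<subseteq> range (br x)" "L.independent BB" "range (br x) \<subseteq> L.span BB"
      "card BB = L.dim (range (br x))"
      using L.basis_exists by blast
    have finBB: "finite BB" using L.independent_span_bound[OF B0(1) BB(2)] B0(4) by auto
    have "card BB \<le> 1" using BB(4) le1[of x] by simp
    then consider "card BB = 0" | "card BB = 1" by linarith
    then show ?thesis
    proof cases
      case 1
      then have "BB = {}" using finBB by simp
      then have "br x w = scl 0 0" for w using BB(3) by auto
      then show ?thesis unfolding L.S_def by blast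
    next
      case 2
      then obtain u where u: "BB = {u}" using card_1_singletonE by blast
      have "\<exists>c. br x w = scl c u" for w
      proof -
        have "br x w \<in> L.span {u}" using BB(3) u by blast
        then have "br x w \<in> range (\<lambda>k. scl k u)" by (simp only: L.span_singleton)
        then show ?thesis by blast
      qed
      then show ?thesis unfolding L.S_def by blast
    qed
  qed
  show ?thesis
  proof (cases "\<exists>y v. v \<noteq> 0 \<and> br v y = v")
    case True
    then obtain y v where "v \<noteq> 0" "br v y = v" by blast
    from L.caseA[OF rank1 this B0(1) B0(4) B0(3) B0(2)] show ?thesis .
  next
    case False
    have "lower_central_series scl br 2 = {0}" using L.caseB[OF rank1 False] .
    then have "lie_nilpotent scl br" unfolding lie_nilpotent_def by blast
    then show ?thesis using assms(6) by blast
  qed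
qed

end
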